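(* Let $n\ge1$, let $\equiv$ be a lattice congruence of the weak order on $S_n$, and let $X$ be an equivalence class with minimum $\pi$ and maximum $\rho$. Then $p(\pi)$ and $p(\rho)$ are the minimum and maximum, respectively, of the equivalence class $p(X)=\{p(\sigma):\sigma\in X\}$ of the restriction $\equiv^*$.
   Context: $S_n$ is the set of permutations of $[n]$ with the weak order (inclusion of inversion sets), which is a lattice. A lattice congruence is an equivalence relation compatible with joins and meets; each of its classes is an interval of the weak order and so has a minimum and a maximum. $p(\sigma)\in S_{n-1}$ is obtained from $\sigma\in S_n$ by deleting $n$. The restriction is defined by $\alpha\equiv^*\beta$ iff $\alpha n\equiv\beta n$ (i.e., $n$ appended at the end); it is a lattice congruence on $S_{n-1}$, and $p(X)$ is one of its classes. *)

theory Defs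
  imports Main
begin

definition perms :: "nat \<Rightarrow> nat list set" where
  "perms n = {w. distinct w \<and> set w = {1..n}}"

definition inversions :: "nat list \<Rightarrow> (nat \<times> nat) set" where
  "inversions w = {(a,b). a < b \<and> (\<exists>i j. i < j \<and> j < length w \<and> w ! i = b \<and> w ! j = a)}"

definition weak_le :: "nat list \<Rightarrow> nat list \<Rightarrow> bool" where
  "weak_le x y \<longleftrightarrow> inversions x \<subseteq> inversions y"

definition weak_join :: "nat \<Rightarrow> nat list \<Rightarrow> nat list \<Rightarrow> nat list" where
  "weak_join n x y = (THE z. z \<in> perms n \<and> weak_le x z \<and> weak_le y z \<and>
      (\<forall>w\<in>perms n. weak_le x w \<and> weak_le y w \<longrightarrow> weak_le z w))"

definition weak_meet :: "nat \<Rightarrow> nat list \<Rightarrow> nat list \<Rightarrow> nat list" where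
  "weak_meet n x y = (THE z. z \<in> perms n \<and> weak_le z x \<and> weak_le z y \<and>
      (\<forall>w\<in>perms n. weak_le w x \<and> weak_le w y \<longrightarrow> weak_le w z))"

definition lattice_congruence :: "nat \<Rightarrow> (nat list \<times> nat list) set \<Rightarrow> bool" where
  "lattice_congruence n R \<longleftrightarrow> equiv (perms n) R \<and>
     (\<forall>x\<in>perms n. \<forall>y\<in>perms n. \<forall>z\<in>perms n. (x, y) \<in> R \<longrightarrow>
        (weak_join n x z, weak_join n y z) \<in> R \<and> (weak_meet n x z, weak_meet n y z) \<in> R)"

definition pdel :: "nat \<Rightarrow> nat list \<Rightarrow> nat list" where
  "pdel n w = removeAll n w"

definition restriction :: "nat \<Rightarrow> (nat list \<times> nat list) set \<Rightarrow> (nat list \<times> nat list) set" where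
  "restriction n R = {(a, b). a \<in> perms (n - 1) \<and> b \<in> perms (n - 1) \<and> (a @ [n], b @ [n]) \<in> R}"

definition is_min :: "nat list \<Rightarrow> nat list set \<Rightarrow> bool" where
  "is_min m A \<longleftrightarrow> m \<in> A \<and> (\<forall>s\<in>A. weak_le m s)"

definition is_max :: "nat list \<Rightarrow> nat list set \<Rightarrow> bool" where
  "is_max m A \<longleftrightarrow> m \<in> A \<and> (\<forall>s\<in>A. weak_le s m)"

end

theory Submission
  imports Defs
begin

lemma pos_alt:
  "(\<exists>i j. i < j \<and> j < length w \<and> w ! i = b \<and> w ! j = a) \<longleftrightarrow>
   (\<exists>xs ys. w = xs @ ys \<and> b \<in> set xs \<and> a \<in> set ys)"
proof
  assume "\<exists>i j. i < j \<and> j < length w \<and> w ! i = b \<and> w ! j = a"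
  then obtain i j where h: "i < j" "j < length w" "w ! i = b" "w ! j = a" by blast
  have "b \<in> set (take (Suc i) w)" using h
    
  proof -
    have "take (Suc i) w ! i = b" using h by simp
    moreover have "i < length (take (Suc i) w)" using h by simp
    ultimately show ?thesis by (metis nth_mem)
  qed
  moreover have "a \<in> set (drop (Suc i) w)" using h
    
  proof -
    have "drop (Suc i) w ! (j - Suc i) = a" using h by simp
    moreover have "j - Suc i < length (drop (Suc i) w)" using h by simp
    ultimately show ?thesis by (metis nth_mem)
  qed
  ultimately show "\<exists>xs ys. w = xs @ ys \<and> b \<in> set xs \<and> a \<in> set ys"
    by (metis append_take_drop_id)
next
  assume "\<exists>xs ys. w = xs @ ys \<and> b \<in> set xs \<and> a \<in> set ys"
  then obtain xs ys where h: "w = xs @ ys" "b \<in> set xs" "a \<in> set ys" by blast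
  obtain i where i: "i < length xs" "xs ! i = b" using h by (metis in_set_conv_nth)
  obtain k where k: "k < length ys" "ys ! k = a" using h by (metis in_set_conv_nth)
  show "\<exists>i j. i < j \<and> j < length w \<and> w ! i = b \<and> w ! j = a"
    apply (rule exI[of _ i], rule exI[of _ "length xs + k"])
    using h i k by (auto simp: nth_append)
qed

lemma filter_split:
  "filter P w = xs @ ys \<Longrightarrow> \<exists>us vs. w = us @ vs \<and> filter P us = xs \<and> filter P vs = ys"
proof (induction w arbitrary: xs)
  case Nil
  then show ?case by simp
next
  case (Cons x w)
  show ?case
  proof (cases "P x")
    case True
    show ?thesis
    proof (cases xs)
      case Nil
      then show ?thesis using Cons.prems by (intro exI[of _ "[]"] exI[of _ "x # w"]) auto
    next
      case (Cons y xs')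
      with True \<open>filter P (x # w) = xs @ ys\<close> have "filter P w = xs' @ ys" "y = x" by auto
      then obtain us vs where "w = us @ vs" "filter P us = xs'" "filter P vs = ys"
        using Cons.IH by blast
      then show ?thesis using True Cons \<open>y = x\<close> by (intro exI[of _ "x # us"] exI[of _ vs]) auto
    qed
  next
    case False
    with Cons.prems have "filter P w = xs @ ys" by simp
    then obtain us vs where "w = us @ vs" "filter P us = xs" "filter P vs = ys"
      using Cons.IH by blast
    then show ?thesis using False by (intro exI[of _ "x # us"] exI[of _ vs]) auto
  qed
qed

lemma inv_alt: "inversions w = {(a,b). a < b \<and> (\<exists>xs ys. w = xs @ ys \<and> b \<in> set xs \<and> a \<in> set ys)}"
  unfolding inversions_def by (simp only: pos_alt)

lemma inv_del: "inversions (pdel n w) = {(a,b). (a,b) \<in> inversions w \<and> a \<noteq> n \<and> b \<noteq> n}"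
proof -
  have key: "(\<exists>xs ys. filter (\<lambda>y. n \<noteq> y) w = xs @ ys \<and> b \<in> set xs \<and> a \<in> set ys) \<longleftrightarrow>
        ((\<exists>xs ys. w = xs @ ys \<and> b \<in> set xs \<and> a \<in> set ys) \<and> a \<noteq> n \<and> b \<noteq> n)" for a b
  proof
    assume "\<exists>xs ys. filter (\<lambda>y. n \<noteq> y) w = xs @ ys \<and> b \<in> set xs \<and> a \<in> set ys"
    then obtain xs ys where h: "filter (\<lambda>y. n \<noteq> y) w = xs @ ys" "b \<in> set xs" "a \<in> set ys" by blast
    then obtain us vs where "w = us @ vs" "filter (\<lambda>y. n \<noteq> y) us = xs" "filter (\<lambda>y. n \<noteq> y) vs = ys"
      using filter_split[OF h(1)] by blast
    then have "b \<in> set us" "b \<noteq> n" "a \<in> set vs" "a \<noteq> n" using h(2,3) by auto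
    then show "(\<exists>xs ys. w = xs @ ys \<and> b \<in> set xs \<and> a \<in> set ys) \<and> a \<noteq> n \<and> b \<noteq> n"
      using \<open>w = us @ vs\<close> by blast
  next
    assume "(\<exists>xs ys. w = xs @ ys \<and> b \<in> set xs \<and> a \<in> set ys) \<and> a \<noteq> n \<and> b \<noteq> n"
    then obtain xs ys where h: "w = xs @ ys" "b \<in> set xs" "a \<in> set ys" "a \<noteq> n" "b \<noteq> n" by blast
    show "\<exists>xs ys. filter (\<lambda>y. n \<noteq> y) w = xs @ ys \<and> b \<in> set xs \<and> a \<in> set ys"
      apply (rule exI[of _ "filter (\<lambda>y. n \<noteq> y) xs"], rule exI[of _ "filter (\<lambda>y. n \<noteq> y) ys"])
      using h by auto
  qed
  show ?thesis unfolding inv_alt pdel_def removeAll_filter_not_eq key by auto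
qed

lemma weak_le_del: "weak_le x y \<Longrightarrow> weak_le (pdel n x) (pdel n y)"
  unfolding weak_le_def inv_del by auto

theorem mainTheorem6:
  fixes n :: nat and R :: "(nat list \<times> nat list) set" and X :: "nat list set"
    and \<pi> \<rho> :: "nat list"
  assumes "n \<ge> 1"
    and "lattice_congruence n R"
    and "X \<in> perms n // R"
    and "is_min \<pi> X" and "is_max \<rho> X"
  shows "is_min (pdel n \<pi>) (pdel n ` X) \<and> is_max (pdel n \<rho>) (pdel n ` X)"
  using assms(4,5) unfolding is_min_def is_max_def by (auto intro: weak_le_del)

end
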